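(* Let $S$ be an additively cancellative centrally essential semiring. Then every complemented idempotent of $S$ is central, i.e. if $e,f\in S$ satisfy $e^2=e$, $f^2=f$ and $e+f=1$, then $e\in C(S)$.
   Context: A semiring is a set $S$ with two binary operations $+$ and $\cdot$ such that $(S,+)$ is a commutative monoid with neutral element $0$, $(S,\cdot)$ is a monoid with identity $1$, multiplication distributes over addition on both sides, and $0s=s0=0$ for all $s\in S$. The center is $C(S)=\{s\in S: ss'=s's \text{ for all } s'\in S\}$. $S$ is centrally essential if for every non-zero $x\in S$ there exist non-zero $y,z\in C(S)$ with $xy=z$. $S$ is additively cancellative if $x+z=y+z$ implies $x=y$. An idempotent $e$ is complemented if there is an idempotent $f\in S$ with $e+f=1$. *)

theory Defs
  imports Main
begin

text \<open>Semirings are modelled by the type class combination {semiring_0, monoid_mult}: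
  commutative additive monoid, multiplicative monoid with 1, two-sided distributivity,
  and 0 absorbing. (No requirement 0 ~= 1.)\<close>

definition center :: "'a::{semiring_0,monoid_mult} set" where
  "center = {s. \<forall>s'. s * s' = s' * s}"

definition centrally_essential :: "'a::{semiring_0,monoid_mult} itself \<Rightarrow> bool" where
  "centrally_essential _ \<longleftrightarrow>
     (\<forall>x::'a. x \<noteq> 0 \<longrightarrow> (\<exists>y z. y \<in> center \<and> z \<in> center \<and> y \<noteq> 0 \<and> z \<noteq> 0 \<and> x * y = z))"

definition add_cancellative :: "'a::{semiring_0,monoid_mult} itself \<Rightarrow> bool" where
  "add_cancellative _ \<longleftrightarrow> (\<forall>x y z::'a. x + z = y + z \<longrightarrow> x = y)"

end

theory Submission
  imports Defs
begin

lemma kill: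
  fixes e f x :: "'a::{semiring_0,monoid_mult}"
  assumes ce: "centrally_essential TYPE('a)"
    and ex: "e * x = x" and xe: "x * e = 0"
  shows "x = 0"
proof (rule ccontr)
  assume "x \<noteq> 0"
  then obtain y z where y: "y \<in> center" and z: "z \<in> center" and "z \<noteq> 0" and xy: "x * y = z"
    using ce unfolding centrally_essential_def by blast
  have "e * z = z" using ex xy by (metis mult.assoc)
  moreover have "z * e = 0"
  proof -
    have "z * e = x * (y * e)" using xy by (metis mult.assoc)
    also have "\<dots> = x * (e * y)" using y by (simp add: center_def)
    also have "\<dots> = 0" using xe by (metis mult.assoc mult_zero_left)
    finally show ?thesis .
  qed
  moreover have "e * z = z * e" using z by (simp add: center_def)
  ultimately show False using \<open>z \<noteq> 0\<close> by simp
qed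

theorem proposition2p3:
  fixes e f :: "'a::{semiring_0,monoid_mult}"
  assumes "add_cancellative TYPE('a)"
    and "centrally_essential TYPE('a)"
    and "e * e = e" and "f * f = f" and "e + f = 1"
  shows "e \<in> center"
proof -
  have canc: "\<And>x y z::'a. x + z = y + z \<Longrightarrow> x = y"
    using assms(1) unfolding add_cancellative_def by blast
  have "e * f + e = 0 + e"
  proof -
    have "e = e * (e + f)" using assms(5) by simp
    thus ?thesis using assms(3) by (simp add: distrib_left add.commute)
  qed
  hence ef: "e * f = 0" by (rule canc)
  have "f * e + f = 0 + f"
  proof -
    have "f = f * (e + f)" using assms(5) by simp
    thus ?thesis using assms(4) by (simp add: distrib_left)
  qed
  hence fe: "f * e = 0" by (rule canc)
  show ?thesis unfolding center_def
  proof (intro CollectI allI)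
    fix s
    have a: "e * s * f = 0"
      using kill[OF assms(2), of e "e * s * f"] assms(3) fe by (metis mult.assoc mult_zero_right)
    have b: "f * s * e = 0"
      using kill[OF assms(2), of f "f * s * e"] assms(4) ef by (metis mult.assoc mult_zero_right)
    have "e * s = e * s * (e + f)" using assms(5) by simp
    also have "\<dots> = e * s * e" using a by (simp add: distrib_left)
    also have "\<dots> = (e + f) * s * e" using b by (simp add: distrib_right)
    also have "\<dots> = s * e" using assms(5) by simp
    finally show "e * s = s * e" .
  qed
qed

end
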